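(* Let $\mu>0$ and let $g:[0,1]\to\mathbb{R}$ be a function such that $t\mapsto t^{\mu}g(t)$ is integrable on $[0,1]$. For integers $n\ge 0$ define the function $$\varphi_{n}(y)=\int_{0}^{1} t^{\mu}\,U_{n-1}\bigl(y-(1+y)t\bigr)\,g(t)\,\mathrm{d}t ,$$ where $U_k$ denotes the Chebyshev polynomial of the second kind of degree $k$ and $U_{-1}\equiv 0$ (so each $\varphi_n$ is a polynomial in $y$ of degree at most $n-1$). Then for every $n\ge 2$, $$\left((1+y)\frac{\mathrm{d}}{\mathrm{d} y} - n\right)\varphi_{n+1}(y) = \left((1+y)\frac{\mathrm{d}}{\mathrm{d} y} + n\right)\varphi_{n-1}(y) + 2n\,\varphi_n(y).$$
   Context: In the paper, $g=g_j$ is any one of the functions $g_1,\dots,g_r$ appearing in a separable approximation $G(y,t)\approx\sum_{j=1}^r\sigma_j f_j(y)g_j(t)$, and the statement is asserted for all $j$; the statement above is for an arbitrary such function $g$. $U_n$ is the Chebyshev polynomial of the second kind, with the convention $U_{-1}=0$. *)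

theory Defs
  imports "HOL-Analysis.Analysis"
begin

fun chebU :: "nat \<Rightarrow> real \<Rightarrow> real" where
  "chebU 0 x = 1"
| "chebU (Suc 0) x = 2 * x"
| "chebU (Suc (Suc k)) x = 2 * x * chebU (Suc k) x - chebU k x"

definition chebU_pred :: "nat \<Rightarrow> real \<Rightarrow> real" where
  "chebU_pred n x = (if n = 0 then 0 else chebU (n - 1) x)"

definition phi :: "real \<Rightarrow> (real \<Rightarrow> real) \<Rightarrow> nat \<Rightarrow> real \<Rightarrow> real" where
  "phi \<mu> g n y = (LINT t:{0..1}|lborel. t powr \<mu> * chebU_pred n (y - (1 + y) * t) * g t)"

end

theory Submission imports Defs begin

fun dU :: "nat \<Rightarrow> real \<Rightarrow> real" where
  "dU 0 x = 0"
| "dU (Suc 0) x = 2"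
| "dU (Suc (Suc k)) x = 2 * chebU (Suc k) x + 2 * x * dU (Suc k) x - dU k x"

lemma dU_diff_aux:
  "dU (Suc (Suc k)) x - dU k x = 2 * (real k + 2) * chebU (Suc k) x \<and>
   dU (Suc (Suc (Suc k))) x - dU (Suc k) x = 2 * (real k + 3) * chebU (Suc (Suc k)) x"
proof (induction k)
  case 0
  then show ?case by (simp add: algebra_simps power2_eq_square)
next
  case (Suc k)
  have A: "dU (Suc (Suc (Suc k))) x - dU (Suc k) x = 2 * (real k + 3) * chebU (Suc (Suc k)) x"
    using Suc by simp
  have B: "dU (Suc (Suc k)) x - dU k x = 2 * (real k + 2) * chebU (Suc k) x"
    using Suc by simp
  have "dU (Suc (Suc (Suc (Suc k)))) x - dU (Suc (Suc k)) x
      = 2 * (chebU (Suc (Suc (Suc k))) x - chebU (Suc k) x) + 2 * x * (dU (Suc (Suc (Suc k))) x - dU (Suc k) x)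
        - (dU (Suc (Suc k)) x - dU k x)"
    by (simp add: algebra_simps)
  also have "\<dots> = 2 * (chebU (Suc (Suc (Suc k))) x - chebU (Suc k) x) + 2 * x * (2 * (real k + 3) * chebU (Suc (Suc k)) x)
        - 2 * (real k + 2) * chebU (Suc k) x" using A B by simp
  also have "\<dots> = 2 * (real (Suc k) + 3) * chebU (Suc (Suc (Suc k))) x"
    by (simp add: algebra_simps)
  finally show ?case using A by simp
qed

lemma pointwise:
  "(1 + x) * dU (Suc (Suc k)) x - (real k + 2) * chebU (Suc (Suc k)) x
   = (1 + x) * dU k x + (real k + 2) * chebU k x + 2 * (real k + 2) * chebU (Suc k) x"
proof -
  have "dU (Suc (Suc k)) x = dU k x + 2 * (real k + 2) * chebU (Suc k) x"
    using dU_diff_aux[of k x] by linarith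
  then show ?thesis by (simp add: algebra_simps)
qed

lemma cont_U_aux: "continuous_on UNIV h \<Longrightarrow> continuous_on UNIV (\<lambda>t. chebU k (h t)) \<and> continuous_on UNIV (\<lambda>t. chebU (Suc k) (h t))"
  by (induction k) (auto intro!: continuous_intros)

lemma cont_U: "continuous_on UNIV h \<Longrightarrow> continuous_on UNIV (\<lambda>t. chebU k (h t))"
  using cont_U_aux by blast

lemma cont_dU_aux: "continuous_on UNIV h \<Longrightarrow> continuous_on UNIV (\<lambda>t. dU k (h t)) \<and> continuous_on UNIV (\<lambda>t. dU (Suc k) (h t))"
  by (induction k) (auto intro!: continuous_intros cont_U)

lemma cont_dU: "continuous_on UNIV h \<Longrightarrow> continuous_on UNIV (\<lambda>t. dU k (h t))"
  using cont_dU_aux by blast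

definition J :: "(real \<Rightarrow> real) \<Rightarrow> (real \<Rightarrow> real) \<Rightarrow> real" where
  "J f h = (LINT t:{0..1}|lborel. f t * h t)"

lemma int_cont:
  fixes f h :: "real \<Rightarrow> real"
  assumes f: "set_integrable lborel {0..1} f" and h: "continuous_on UNIV h"
  shows "set_integrable lborel {0..1} (\<lambda>t. f t * h t)"
proof -
  have "compact (h ` {0..1::real})" by (rule compact_continuous_image[OF continuous_on_subset[OF h]]) auto
  then obtain B where B: "\<And>t. t \<in> {0..1} \<Longrightarrow> norm (h t) \<le> B"
    by (meson bounded_iff compact_imp_bounded imageI)
  have fB: "set_integrable lborel {0..1} (\<lambda>t. B * f t)" using f by auto
  have hm: "h \<in> borel_measurable lborel" using h by (simp add: borel_measurable_continuous_onI)
  have "(\<lambda>x. indicator {0..1} x *\<^sub>R f x) \<in> borel_measurable lborel"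
    using f unfolding set_integrable_def by auto
  then have "(\<lambda>x. (indicator {0..1} x *\<^sub>R f x) * h x) \<in> borel_measurable lborel"
    using hm by measurable
  moreover have "(\<lambda>x. (indicator {0..1} x *\<^sub>R f x) * h x) = (\<lambda>x. indicator {0..1} x *\<^sub>R (f x * h x))"
    by (auto simp: indicator_def)
  ultimately have m: "set_borel_measurable lborel {0..1} (\<lambda>t. f t * h t)"
    unfolding set_borel_measurable_def by simp
  show ?thesis
  proof (rule set_integrable_bound[OF fB m])
    show "AE x in lborel. x \<in> {0..1} \<longrightarrow> norm (f x * h x) \<le> norm (B * f x)"
    proof (rule AE_I2, rule impI)
      fix x :: real assume x: "x \<in> {0..1}"
      have "norm (f x * h x) = norm (f x) * norm (h x)" by (simp add: abs_mult)
      also have "\<dots> \<le> norm (f x) * B" using B[OF x] by (simp add: mult_left_mono)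
      also have "\<dots> \<le> norm (B * f x)" by (simp add: abs_mult mult.commute mult_right_mono)
      finally show "norm (f x * h x) \<le> norm (B * f x)" .
    qed
  qed
qed


lemma J_lin2:
  fixes f h1 h2 :: "real \<Rightarrow> real"
  assumes f: "set_integrable lborel {0..1} f"
    and c1: "continuous_on UNIV h1" and c2: "continuous_on UNIV h2"
  shows "J f (\<lambda>t. a * h1 t + b * h2 t) = a * J f h1 + b * J f h2"
proof -
  have i1: "set_integrable lborel {0..1} (\<lambda>t. a * (f t * h1 t))"
    using int_cont[OF f c1] by auto
  have i2: "set_integrable lborel {0..1} (\<lambda>t. b * (f t * h2 t))"
    using int_cont[OF f c2] by auto
  have "J f (\<lambda>t. a * h1 t + b * h2 t) = (LINT t:{0..1}|lborel. a * (f t * h1 t) + b * (f t * h2 t))"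
    unfolding J_def by (simp add: algebra_simps)
  also have "\<dots> = (LINT t:{0..1}|lborel. a * (f t * h1 t)) + (LINT t:{0..1}|lborel. b * (f t * h2 t))"
    by (rule set_integral_add(2)[OF i1 i2])
  also have "\<dots> = a * J f h1 + b * J f h2" unfolding J_def by simp
  finally show ?thesis .
qed

lemma J_lin3:
  fixes f h1 h2 h3 :: "real \<Rightarrow> real"
  assumes f: "set_integrable lborel {0..1} f"
    and c1: "continuous_on UNIV h1" and c2: "continuous_on UNIV h2" and c3: "continuous_on UNIV h3"
  shows "J f (\<lambda>t. a1 * h1 t + a2 * h2 t + a3 * h3 t) = a1 * J f h1 + a2 * J f h2 + a3 * J f h3"
proof -
  have "J f (\<lambda>t. a1 * h1 t + a2 * h2 t + a3 * h3 t) = J f (\<lambda>t. 1 * (a1 * h1 t + a2 * h2 t) + a3 * h3 t)" by simp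
  also have "\<dots> = 1 * J f (\<lambda>t. a1 * h1 t + a2 * h2 t) + a3 * J f h3"
    by (rule J_lin2[OF f _ c3]) (intro continuous_intros c1 c2)
  also have "\<dots> = a1 * J f h1 + a2 * J f h2 + a3 * J f h3" using J_lin2[OF f c1 c2] by simp
  finally show ?thesis .
qed

lemma J_lin4:
  fixes f h1 h2 h3 h4 :: "real \<Rightarrow> real"
  assumes f: "set_integrable lborel {0..1} f"
    and c1: "continuous_on UNIV h1" and c2: "continuous_on UNIV h2" and c3: "continuous_on UNIV h3"
    and c4: "continuous_on UNIV h4"
  shows "J f (\<lambda>t. a1 * h1 t + a2 * h2 t + a3 * h3 t + a4 * h4 t) = a1 * J f h1 + a2 * J f h2 + a3 * J f h3 + a4 * J f h4"
proof -
  have "J f (\<lambda>t. a1 * h1 t + a2 * h2 t + a3 * h3 t + a4 * h4 t) = J f (\<lambda>t. 1 * (a1 * h1 t + a2 * h2 t + a3 * h3 t) + a4 * h4 t)" by simp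
  also have "\<dots> = 1 * J f (\<lambda>t. a1 * h1 t + a2 * h2 t + a3 * h3 t) + a4 * J f h4"
    by (rule J_lin2[OF f _ c4]) (intro continuous_intros c1 c2 c3)
  also have "\<dots> = a1 * J f h1 + a2 * J f h2 + a3 * J f h3 + a4 * J f h4" using J_lin3[OF f c1 c2 c3] by simp
  finally show ?thesis .
qed

lemma J_lin5:
  fixes f h1 h2 h3 h4 h5 :: "real \<Rightarrow> real"
  assumes f: "set_integrable lborel {0..1} f"
    and c1: "continuous_on UNIV h1" and c2: "continuous_on UNIV h2" and c3: "continuous_on UNIV h3"
    and c4: "continuous_on UNIV h4" and c5: "continuous_on UNIV h5"
  shows "J f (\<lambda>t. a1 * h1 t + a2 * h2 t + a3 * h3 t + a4 * h4 t + a5 * h5 t) = a1 * J f h1 + a2 * J f h2 + a3 * J f h3 + a4 * J f h4 + a5 * J f h5"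
proof -
  have "J f (\<lambda>t. a1 * h1 t + a2 * h2 t + a3 * h3 t + a4 * h4 t + a5 * h5 t) = J f (\<lambda>t. 1 * (a1 * h1 t + a2 * h2 t + a3 * h3 t + a4 * h4 t) + a5 * h5 t)" by simp
  also have "\<dots> = 1 * J f (\<lambda>t. a1 * h1 t + a2 * h2 t + a3 * h3 t + a4 * h4 t) + a5 * J f h5"
    by (rule J_lin2[OF f _ c5]) (intro continuous_intros c1 c2 c3 c4)
  also have "\<dots> = a1 * J f h1 + a2 * J f h2 + a3 * J f h3 + a4 * J f h4 + a5 * J f h5" using J_lin4[OF f c1 c2 c3 c4] by simp
  finally show ?thesis .
qed

lemma J_cong: "(\<And>t. h1 t = h2 t) \<Longrightarrow> J f h1 = J f h2"
  by (simp add: J_def)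

lemma J_zero: "J f (\<lambda>t. 0) = 0"
  by (simp add: J_def)

lemma DJ_aux:
  fixes f :: "real \<Rightarrow> real"
  assumes f: "set_integrable lborel {0..1} f"
  shows "(\<forall>w. continuous_on UNIV w \<longrightarrow> ((\<lambda>y. J f (\<lambda>t. w t * chebU k (y - (1+y)*t))) has_real_derivative
            J f (\<lambda>t. w t * ((1-t) * dU k (y - (1+y)*t)))) (at y)) \<and>
         (\<forall>w. continuous_on UNIV w \<longrightarrow> ((\<lambda>y. J f (\<lambda>t. w t * chebU (Suc k) (y - (1+y)*t))) has_real_derivative
            J f (\<lambda>t. w t * ((1-t) * dU (Suc k) (y - (1+y)*t)))) (at y))"
proof (induction k)
  case 0
  have A: "\<forall>w. continuous_on UNIV w \<longrightarrow> ((\<lambda>y. J f (\<lambda>t. w t * chebU 0 (y - (1+y)*t))) has_real_derivative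
            J f (\<lambda>t. w t * ((1-t) * dU 0 (y - (1+y)*t)))) (at y)"
    by (simp add: J_zero)
  have B: "((\<lambda>y. J f (\<lambda>t. w t * chebU (Suc 0) (y - (1+y)*t))) has_real_derivative
            J f (\<lambda>t. w t * ((1-t) * dU (Suc 0) (y - (1+y)*t)))) (at y)" if w: "continuous_on UNIV w" for w
  proof -
    have c1: "continuous_on UNIV (\<lambda>t. 2 * w t * (1 - t))" and c2: "continuous_on UNIV (\<lambda>t. w t * t)"
      by (intro continuous_intros w)+
    have eq: "J f (\<lambda>t. w t * chebU (Suc 0) (z - (1+z)*t)) = z * J f (\<lambda>t. 2 * w t * (1 - t)) + (-2) * J f (\<lambda>t. w t * t)" for z
      by (subst J_lin2[OF f c1 c2, symmetric]) (rule J_cong, simp add: algebra_simps)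
    have "((\<lambda>z. z * J f (\<lambda>t. 2 * w t * (1 - t)) + (-2) * J f (\<lambda>t. w t * t)) has_real_derivative
             1 * J f (\<lambda>t. 2 * w t * (1 - t)) + 0) (at y)"
      by (rule derivative_eq_intros refl | simp)+
    moreover have "1 * J f (\<lambda>t. 2 * w t * (1 - t)) + 0 = J f (\<lambda>t. w t * ((1-t) * dU (Suc 0) (y - (1+y)*t)))"
      by (simp, rule J_cong, simp add: algebra_simps)
    ultimately show ?thesis unfolding eq by simp
  qed
  show ?case using A B by blast
next
  case (Suc k)
  have IH0: "\<And>w. continuous_on UNIV w \<Longrightarrow> ((\<lambda>y. J f (\<lambda>t. w t * chebU k (y - (1+y)*t))) has_real_derivative
            J f (\<lambda>t. w t * ((1-t) * dU k (y - (1+y)*t)))) (at y)" using Suc by blast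
  have IH1: "\<And>w. continuous_on UNIV w \<Longrightarrow> ((\<lambda>y. J f (\<lambda>t. w t * chebU (Suc k) (y - (1+y)*t))) has_real_derivative
            J f (\<lambda>t. w t * ((1-t) * dU (Suc k) (y - (1+y)*t)))) (at y)" using Suc by blast
  have B: "((\<lambda>y. J f (\<lambda>t. w t * chebU (Suc (Suc k)) (y - (1+y)*t))) has_real_derivative
            J f (\<lambda>t. w t * ((1-t) * dU (Suc (Suc k)) (y - (1+y)*t)))) (at y)" if w: "continuous_on UNIV w" for w
  proof -
    have cX: "continuous_on UNIV (\<lambda>t::real. z - (1+z)*t)" for z by (intro continuous_intros)
    have w1: "continuous_on UNIV (\<lambda>t. w t * (1 - t))" and w2: "continuous_on UNIV (\<lambda>t. w t * t)"
      by (intro continuous_intros w)+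
    have c1: "continuous_on UNIV (\<lambda>t. w t * (1 - t) * chebU (Suc k) (z - (1+z)*t))"
     and c2: "continuous_on UNIV (\<lambda>t. w t * t * chebU (Suc k) (z - (1+z)*t))"
     and c3: "continuous_on UNIV (\<lambda>t. w t * chebU k (z - (1+z)*t))" for z
      by (intro continuous_intros w cont_U[OF cX])+
    have eq: "J f (\<lambda>t. w t * chebU (Suc (Suc k)) (z - (1+z)*t))
       = (2 * z) * J f (\<lambda>t. w t * (1 - t) * chebU (Suc k) (z - (1+z)*t))
         + (-2) * J f (\<lambda>t. w t * t * chebU (Suc k) (z - (1+z)*t))
         + (-1) * J f (\<lambda>t. w t * chebU k (z - (1+z)*t))" for z
      by (subst J_lin3[OF f c1 c2 c3, symmetric]) (rule J_cong, simp add: algebra_simps)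
    have d1: "((\<lambda>z. J f (\<lambda>t. w t * (1 - t) * chebU (Suc k) (z - (1+z)*t))) has_real_derivative
            J f (\<lambda>t. w t * (1 - t) * ((1-t) * dU (Suc k) (y - (1+y)*t)))) (at y)"
      using IH1[OF w1] by simp
    have d2: "((\<lambda>z. J f (\<lambda>t. w t * t * chebU (Suc k) (z - (1+z)*t))) has_real_derivative
            J f (\<lambda>t. w t * t * ((1-t) * dU (Suc k) (y - (1+y)*t)))) (at y)"
      using IH1[OF w2] by simp
    note d3 = IH0[OF w]
    have D: "((\<lambda>z. (2 * z) * J f (\<lambda>t. w t * (1 - t) * chebU (Suc k) (z - (1+z)*t))
         + (-2) * J f (\<lambda>t. w t * t * chebU (Suc k) (z - (1+z)*t))
         + (-1) * J f (\<lambda>t. w t * chebU k (z - (1+z)*t))) has_real_derivative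
         (2 * J f (\<lambda>t. w t * (1 - t) * chebU (Suc k) (y - (1+y)*t))
          + (2 * y) * J f (\<lambda>t. w t * (1 - t) * ((1-t) * dU (Suc k) (y - (1+y)*t))))
         + (-2) * J f (\<lambda>t. w t * t * ((1-t) * dU (Suc k) (y - (1+y)*t)))
         + (-1) * J f (\<lambda>t. w t * ((1-t) * dU k (y - (1+y)*t)))) (at y)"
      by (rule derivative_eq_intros d1 d2 d3 | simp)+
    have ca: "continuous_on UNIV (\<lambda>t. w t * (1 - t) * chebU (Suc k) (y - (1+y)*t))"
     and cb: "continuous_on UNIV (\<lambda>t. w t * (1 - t) * ((1-t) * dU (Suc k) (y - (1+y)*t)))"
     and cc: "continuous_on UNIV (\<lambda>t. w t * t * ((1-t) * dU (Suc k) (y - (1+y)*t)))"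
     and cd: "continuous_on UNIV (\<lambda>t. w t * ((1-t) * dU k (y - (1+y)*t)))"
      by (intro continuous_intros w cont_U[OF cX] cont_dU[OF cX])+
    have val: "2 * J f (\<lambda>t. w t * (1 - t) * chebU (Suc k) (y - (1+y)*t))
          + (2 * y) * J f (\<lambda>t. w t * (1 - t) * ((1-t) * dU (Suc k) (y - (1+y)*t)))
         + (-2) * J f (\<lambda>t. w t * t * ((1-t) * dU (Suc k) (y - (1+y)*t)))
         + (-1) * J f (\<lambda>t. w t * ((1-t) * dU k (y - (1+y)*t)))
        = J f (\<lambda>t. w t * ((1-t) * dU (Suc (Suc k)) (y - (1+y)*t)))"
      by (subst J_lin4[OF f ca cb cc cd, symmetric]) (rule J_cong, simp add: algebra_simps)
    show ?thesis using D unfolding eq[symmetric] val .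
  qed
  show ?case using IH1 B by blast
qed


lemma phi_J:
  "phi \<mu> g (Suc m) = (\<lambda>z. J (\<lambda>t. t powr \<mu> * g t) (\<lambda>t. (\<lambda>t. 1) t * chebU m (z - (1+z)*t)))"
  unfolding phi_def J_def chebU_pred_def by (rule ext) (simp add: mult_ac)

lemma deriv_phi:
  assumes f: "set_integrable lborel {0..1} (\<lambda>t. t powr \<mu> * g t)"
  shows "deriv (phi \<mu> g (Suc m)) y = J (\<lambda>t. t powr \<mu> * g t) (\<lambda>t. (\<lambda>t. 1) t * ((1-t) * dU m (y - (1+y)*t)))"
proof -
  have "continuous_on UNIV (\<lambda>t::real. 1::real)" by (intro continuous_intros)
  then show ?thesis unfolding phi_J using DJ_aux[OF f, of m y]
    by (intro DERIV_imp_deriv) blast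
qed

theorem theorem2p2:
  fixes \<mu> :: real and g :: "real \<Rightarrow> real" and n :: nat and y :: real
  assumes "\<mu> > 0"
    and f: "set_integrable lborel {0..1} (\<lambda>t. t powr \<mu> * g t)"
    and "n \<ge> 2"
  shows "(1 + y) * deriv (phi \<mu> g (n + 1)) y - real n * phi \<mu> g (n + 1) y
         = (1 + y) * deriv (phi \<mu> g (n - 1)) y + real n * phi \<mu> g (n - 1) y
           + 2 * real n * phi \<mu> g n y"
proof -
  obtain k where n: "n = Suc (Suc k)" using \<open>n \<ge> 2\<close> by (metis add_2_eq_Suc le_Suc_ex)
  define F where "F = (\<lambda>t. t powr \<mu> * g t)"
  have fF: "set_integrable lborel {0..1} F" using f unfolding F_def .
  have cX: "continuous_on UNIV (\<lambda>t::real. y - (1+y)*t)" by (intro continuous_intros)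
  define h1 where "h1 = (\<lambda>t. (1-t) * dU (Suc (Suc k)) (y - (1+y)*t))"
  define h2 where "h2 = (\<lambda>t. chebU (Suc (Suc k)) (y - (1+y)*t))"
  define h3 where "h3 = (\<lambda>t. (1-t) * dU k (y - (1+y)*t))"
  define h4 where "h4 = (\<lambda>t. chebU k (y - (1+y)*t))"
  define h5 where "h5 = (\<lambda>t. chebU (Suc k) (y - (1+y)*t))"
  have c1: "continuous_on UNIV h1" and c2: "continuous_on UNIV h2" and c3: "continuous_on UNIV h3"
    and c4: "continuous_on UNIV h4" and c5: "continuous_on UNIV h5"
    unfolding h1_def h2_def h3_def h4_def h5_def
    by (intro continuous_intros cont_U[OF cX] cont_dU[OF cX])+
  have e1: "deriv (phi \<mu> g (n + 1)) y = J F h1"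
    unfolding n F_def h1_def using deriv_phi[OF f, of "Suc (Suc k)" y] by simp
  have e3: "deriv (phi \<mu> g (n - 1)) y = J F h3"
    unfolding n F_def h3_def using deriv_phi[OF f, of k y] by simp
  have e2: "phi \<mu> g (n + 1) y = J F h2"
    unfolding n F_def h2_def by (simp add: phi_J del: chebU.simps)
  have e4: "phi \<mu> g (n - 1) y = J F h4"
    unfolding n F_def h4_def by (simp add: phi_J del: chebU.simps)
  have e5: "phi \<mu> g n y = J F h5"
    unfolding n F_def h5_def by (simp add: phi_J del: chebU.simps)
  have "(1 + y) * J F h1 + (- real n) * J F h2 + (- (1 + y)) * J F h3 + (- real n) * J F h4 + (- 2 * real n) * J F h5
      = J F (\<lambda>t. (1 + y) * h1 t + (- real n) * h2 t + (- (1 + y)) * h3 t + (- real n) * h4 t + (- 2 * real n) * h5 t)"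
    by (rule J_lin5[OF fF c1 c2 c3 c4 c5, symmetric])
  also have "\<dots> = J F (\<lambda>t. 0)"
  proof (rule J_cong)
    fix t
    have "(1 + y) * (1 - t) = 1 + (y - (1+y)*t)" by (simp add: algebra_simps)
    then show "(1 + y) * h1 t + (- real n) * h2 t + (- (1 + y)) * h3 t + (- real n) * h4 t + (- 2 * real n) * h5 t = 0"
      unfolding h1_def h2_def h3_def h4_def h5_def n
      using pointwise[of "y - (1+y)*t" k]
      by (simp add: algebra_simps)
  qed
  also have "\<dots> = 0" by (rule J_zero)
  finally show ?thesis unfolding e1 e2 e3 e4 e5 by (simp add: algebra_simps)
qed

end
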